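(* With the notation of the context, let $$\rho^*=\frac{\eta T}{W\left(\lambda\gamma s_0\eta^2Te^{(\nu-\frac{\eta^2}{2})T}\right)}\frac{\mu-r}{\sigma}.$$ If $\rho^*\le-1$, then $d$ is increasing on $(-1,1)$. If $\rho^*\ge1$, then $d$ is decreasing on $(-1,1)$. If $-1<\rho^*<1$, then $d$ is decreasing on $(-1,\rho^* )$ and increasing on $(\rho^*,1)$, $$d(\rho^* )=d(0)-e^{-rT}\frac{(\mu-r)^2T}{2\gamma\sigma^2},\qquad g(\rho^* )=g(0)-e^{-rT}\frac{(\mu-r)^2T}{2\gamma\sigma^2},$$ and moreover $$\inf_{\rho\in(-1,1)}p(\rho)\ge d(0)-\frac{e^{-rT}}{2\gamma}\left(\frac{\mu-r}{\sigma}\right)^2T,\qquad \inf_{\rho\in(-1,1)}V_\rho(x_0,s_0,\lambda)\ge-\frac1\gamma\exp\left(-\gamma e^{rT}(x_0+d(0))\right).$$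
   Context: Fix $T>0$, $r,\nu,\mu,x_0\in\mathbb R$, $\eta>0$, $\sigma>0$, $s_0>0$, $\lambda>0$, $\gamma>0$; $N$ is a standard Gaussian random variable; $W$ is the Lambert function (inverse of $x\in(-1,\infty)\mapsto xe^x$). For $\rho\in(-1,1)$ let $\theta(\rho)=\lambda\gamma(1-\rho^2)$, $w(\rho)=W\left(s_0\eta^2Te^{(\nu-\eta\rho\frac{\mu-r}{\sigma}-\frac{\eta^2}{2})T}\theta(\rho)\right)$, $$d(\rho)=\frac{\lambda e^{-rT}}{\theta(\rho)\eta^2T}w(\rho)\left(1+\frac{w(\rho)}2\right),\qquad g(\rho)=\frac{\lambda e^{-rT}}{\theta(\rho)}\frac{w(\rho)}{\eta^2T}\left(e^{\frac{\eta^2}{2}T}+\frac{w(\rho)}2\right),$$ $$p(\rho)=-\frac{e^{-rT}}{\gamma(1-\rho^2)}\ln\mathbb E\exp\left(-\theta(\rho)s_0e^{(\nu-\eta\rho\frac{\mu-r}{\sigma}-\frac{\eta^2}{2})T}e^{\eta\sqrt TN}\right),$$ $$V_\rho(x_0,s_0,\lambda)=-\frac1\gamma\exp\left(-\gamma e^{rT}(x_0+p(\rho))-\frac{(\mu-r)^2}{2\sigma^2}T\right).$$ Here $p(\rho)$ and $V_\rho$ are the asking reservation price and the value function of an exponential-utility agent receiving $\lambda$ units of a non-traded stock ($dS=S(\nu dt+\eta dZ)$), hedging with a traded asset ($dP=P(\mu dt+\sigma dB)$) of correlation $\rho$, bond rate $r$. *)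

theory Defs
  imports "HOL-Probability.Probability"
begin

definition lambertW :: "real \<Rightarrow> real" where
  "lambertW y = (THE w. w > -1 \<and> w * exp w = y)"

definition gauss_expect :: "(real \<Rightarrow> real) \<Rightarrow> real" where
  "gauss_expect f = integral\<^sup>L (density lborel std_normal_density) f"

definition theta :: "real \<Rightarrow> real \<Rightarrow> real \<Rightarrow> real" where
  "theta lam gam \<rho> = lam * gam * (1 - \<rho>\<^sup>2)"

definition drift :: "real \<Rightarrow> real \<Rightarrow> real \<Rightarrow> real \<Rightarrow> real \<Rightarrow> real \<Rightarrow> real" where
  "drift r nu mu sig eta \<rho> = nu - eta * \<rho> * ((mu - r) / sig) - eta\<^sup>2 / 2"

definition wfun :: "real \<Rightarrow> real \<Rightarrow> real \<Rightarrow> real \<Rightarrow> real \<Rightarrow> real \<Rightarrow> real \<Rightarrow> real \<Rightarrow> real \<Rightarrow> real \<Rightarrow> real" where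
  "wfun T r nu mu sig eta s0 lam gam \<rho> =
     lambertW (s0 * eta\<^sup>2 * T * exp (drift r nu mu sig eta \<rho> * T) * theta lam gam \<rho>)"

definition dfun :: "real \<Rightarrow> real \<Rightarrow> real \<Rightarrow> real \<Rightarrow> real \<Rightarrow> real \<Rightarrow> real \<Rightarrow> real \<Rightarrow> real \<Rightarrow> real \<Rightarrow> real" where
  "dfun T r nu mu sig eta s0 lam gam \<rho> =
     (let w = wfun T r nu mu sig eta s0 lam gam \<rho> in
      lam * exp (- r * T) / (theta lam gam \<rho> * eta\<^sup>2 * T) * w * (1 + w / 2))"

definition gfun :: "real \<Rightarrow> real \<Rightarrow> real \<Rightarrow> real \<Rightarrow> real \<Rightarrow> real \<Rightarrow> real \<Rightarrow> real \<Rightarrow> real \<Rightarrow> real \<Rightarrow> real" where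
  "gfun T r nu mu sig eta s0 lam gam \<rho> =
     (let w = wfun T r nu mu sig eta s0 lam gam \<rho> in
      lam * exp (- r * T) / theta lam gam \<rho> * (w / (eta\<^sup>2 * T)) * (exp (eta\<^sup>2 / 2 * T) + w / 2))"

definition pfun :: "real \<Rightarrow> real \<Rightarrow> real \<Rightarrow> real \<Rightarrow> real \<Rightarrow> real \<Rightarrow> real \<Rightarrow> real \<Rightarrow> real \<Rightarrow> real \<Rightarrow> real" where
  "pfun T r nu mu sig eta s0 lam gam \<rho> =
     - (exp (- r * T) / (gam * (1 - \<rho>\<^sup>2))) *
       ln (gauss_expect (\<lambda>n. exp (- theta lam gam \<rho> * s0 * exp (drift r nu mu sig eta \<rho> * T)
                                    * exp (eta * sqrt T * n))))"

definition Vfun :: "real \<Rightarrow> real \<Rightarrow> real \<Rightarrow> real \<Rightarrow> real \<Rightarrow> real \<Rightarrow> real \<Rightarrow> real \<Rightarrow> real \<Rightarrow> real \<Rightarrow> real \<Rightarrow> real" where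
  "Vfun T r nu mu sig eta x0 s0 lam gam \<rho> =
     - (1 / gam) * exp (- gam * exp (r * T) * (x0 + pfun T r nu mu sig eta s0 lam gam \<rho>)
                        - (mu - r)\<^sup>2 / (2 * sig\<^sup>2) * T)"

end

theory Submission
  imports Defs
begin


lemma xexp_strict_mono: "(0::real) \<le> x \<Longrightarrow> x < y \<Longrightarrow> x * exp x < y * exp y"
  by (meson exp_gt_zero exp_less_cancel_iff le_less_trans less_imp_le mult_less_le_imp_less)

lemma xexp_pos_imp: "(v::real) * exp v > 0 \<Longrightarrow> v > 0"
  by (simp add: zero_less_mult_iff)

lemma lambertW_eq:
  assumes "w > 0" "w * exp w = y"
  shows "lambertW y = w"
  unfolding lambertW_def
proof (rule the_equality)
  show "w > -1 \<and> w * exp w = y" using assms by auto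
  fix v assume v: "v > -1 \<and> v * exp v = y"
  then have "v > 0" using assms xexp_pos_imp[of v] by (metis exp_gt_zero mult_pos_pos)
  show "v = w"
    using xexp_strict_mono[of v w] xexp_strict_mono[of w v] v assms \<open>v>0\<close>
    by (cases "v < w"; cases "w < v") auto
qed

lemma lambertW_ex:
  assumes "y > (0::real)"
  shows "\<exists>w. w > 0 \<and> w * exp w = y"
proof -
  have "0 * exp 0 \<le> y" "y \<le> y * exp y" using assms by auto
  moreover have "\<forall>x. 0 \<le> x \<and> x \<le> y \<longrightarrow> isCont (\<lambda>x. x * exp x) x" by (auto intro!: continuous_intros)
  ultimately obtain w where "0 \<le> w" "w \<le> y" "w * exp w = y"
    using IVT[of "\<lambda>x. x * exp x" 0 y y] assms by auto
  then show ?thesis using assms by (intro exI[of _ w]) (auto simp: le_less)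
qed

lemma lambertW_pos:
  assumes "y > (0::real)"
  shows "lambertW y > 0" "lambertW y * exp (lambertW y) = y"
  using lambertW_ex[OF assms] lambertW_eq by auto

lemma lambertW_xexp: "w > 0 \<Longrightarrow> lambertW (w * exp w) = w"
  using lambertW_eq by auto

lemma lambertW_deriv:
  assumes "y > (0::real)"
  shows "(lambertW has_real_derivative inverse ((1 + lambertW y) * exp (lambertW y))) (at y)"
proof (rule DERIV_inverse_function[where f="\<lambda>x. x * exp x" and a=0 and b="y+1"])
  show "((\<lambda>x. x * exp x) has_real_derivative (1 + lambertW y) * exp (lambertW y)) (at (lambertW y))"
    by (auto intro!: derivative_eq_intros simp: algebra_simps)
  show "(1 + lambertW y) * exp (lambertW y) \<noteq> 0" using lambertW_pos[OF assms] by auto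
  show "0 < y" "y < y + 1" using assms by auto
  show "\<And>z. 0 < z \<Longrightarrow> z < y + 1 \<Longrightarrow> lambertW z * exp (lambertW z) = z" using lambertW_pos by auto
  let ?x = "lambertW y"
  have x: "?x > 0" using lambertW_pos[OF assms] by auto
  have "isCont lambertW ((\<lambda>x. x * exp x) ?x)"
  proof (rule isCont_inverse_function[where d="?x/2" and x="?x" and f="\<lambda>x. x * exp x"])
    fix z assume "\<bar>z - ?x\<bar> \<le> ?x/2"
    then have "z > 0" using x by arith
    then show "lambertW (z * exp z) = z" by (rule lambertW_xexp)
  qed (use x in \<open>auto intro!: continuous_intros\<close>)
  then show "isCont lambertW y" using lambertW_pos[OF assms] by simp
qed

lemma alg1: "0 < (w::real) \<Longrightarrow> inverse ((1 + w) * exp w) * (w * exp w * X) = w / (1 + w) * X"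
proof -
  assume h: "0 < w"
  have "inverse ((1 + w) * exp w) * (w * exp w * X) = (w * X) * (exp w / exp w) / (1 + w)"
    by (simp add: divide_simps)
  also have "\<dots> = w / (1 + w) * X" by simp
  finally show ?thesis .
qed
lemma alg2: "(q::real) > 0 \<Longrightarrow> 0 < w \<Longrightarrow> ((w / (1 + w) * (- 2 * x / q - a) + 2 * w * (w / (1 + w) * (- 2 * x / q - a)) / 2) *
     q + (w + w\<^sup>2 / 2) * (2 * x)) / q\<^sup>2 = w / q * (x * w / q - a)"
proof -
  assume h: "q > 0" "0 < w"
  define Y where "Y = - 2 * x / q - a"
  have "w / (1 + w) * Y + 2 * w * (w / (1 + w) * Y) / 2 = w * Y * (1 + w) / (1 + w)"
    by (simp add: divide_simps) (simp add: algebra_simps)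
  also have "\<dots> = w * Y" using h by simp
  finally have e: "w / (1 + w) * Y + 2 * w * (w / (1 + w) * Y) / 2 = w * Y" .
  show ?thesis unfolding Y_def[symmetric] e unfolding Y_def using h
    by (simp add: field_simps power2_eq_square)
qed
locale lw =
  fixes K a :: real
  assumes K: "K > 0"
begin

definition Af :: "real \<Rightarrow> real" where "Af \<rho> = K * (1 - \<rho>\<^sup>2) * exp (- a * \<rho>)"
definition Wf :: "real \<Rightarrow> real" where "Wf \<rho> = lambertW (Af \<rho>)"
definition Df :: "real \<Rightarrow> real" where "Df \<rho> = (Wf \<rho> + (Wf \<rho>)\<^sup>2 / 2) / (1 - \<rho>\<^sup>2)"

lemma sq_lt1: "\<bar>\<rho>\<bar> < 1 \<Longrightarrow> 1 - \<rho>\<^sup>2 > (0::real)"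
  by (simp add: abs_square_less_1)

lemma Af_pos: "\<bar>\<rho>\<bar> < 1 \<Longrightarrow> Af \<rho> > 0"
  unfolding Af_def using K sq_lt1 by auto

lemma Wf_pos: "\<bar>\<rho>\<bar> < 1 \<Longrightarrow> Wf \<rho> > 0" and Wf_eq: "\<bar>\<rho>\<bar> < 1 \<Longrightarrow> Wf \<rho> * exp (Wf \<rho>) = Af \<rho>"
  unfolding Wf_def using lambertW_pos Af_pos by auto

lemma Wf_deriv:
  assumes r: "\<bar>\<rho>\<bar> < 1"
  shows "(Wf has_real_derivative Wf \<rho> / (1 + Wf \<rho>) * (- 2 * \<rho> / (1 - \<rho>\<^sup>2) - a)) (at \<rho>)"
proof -
  have q: "1 - \<rho>\<^sup>2 > 0" using sq_lt1[OF r] .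
  have dA: "(Af has_real_derivative Af \<rho> * (- 2 * \<rho> / (1 - \<rho>\<^sup>2) - a)) (at \<rho>)"
    unfolding Af_def
    by (rule derivative_eq_intros refl | simp)+ (use q in \<open>simp add: field_simps power2_eq_square\<close>)
  have "(Wf has_real_derivative inverse ((1 + Wf \<rho>) * exp (Wf \<rho>)) * (Af \<rho> * (- 2 * \<rho> / (1 - \<rho>\<^sup>2) - a))) (at \<rho>)"
    unfolding Wf_def[abs_def] by (rule DERIV_chain2[OF lambertW_deriv[OF Af_pos[OF r]] dA])
  moreover have "inverse ((1 + Wf \<rho>) * exp (Wf \<rho>)) * (Af \<rho> * (- 2 * \<rho> / (1 - \<rho>\<^sup>2) - a))
      = Wf \<rho> / (1 + Wf \<rho>) * (- 2 * \<rho> / (1 - \<rho>\<^sup>2) - a)"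
    unfolding Wf_eq[OF r, symmetric] using Wf_pos[OF r] by (rule alg1)
  ultimately show ?thesis by simp
qed

lemma Df_deriv:
  assumes r: "\<bar>\<rho>\<bar> < 1"
  shows "(Df has_real_derivative Wf \<rho> / (1 - \<rho>\<^sup>2) * (\<rho> * Wf \<rho> / (1 - \<rho>\<^sup>2) - a)) (at \<rho>)"
proof -
  have q: "1 - \<rho>\<^sup>2 > 0" using sq_lt1[OF r] .
  have w: "Wf \<rho> > 0" using Wf_pos[OF r] .
  show ?thesis
  proof -
    define Y where "Y = - 2 * \<rho> / (1 - \<rho>\<^sup>2) - a"
    have f: "((\<lambda>t. t + t\<^sup>2 / 2) has_real_derivative 1 + Wf \<rho>) (at (Wf \<rho>))"
      by (auto intro!: derivative_eq_intros)
    have "((\<lambda>x. Wf x + (Wf x)\<^sup>2 / 2) has_real_derivative (1 + Wf \<rho>) * (Wf \<rho> / (1 + Wf \<rho>) * Y)) (at \<rho>)"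
      using DERIV_chain2[OF f Wf_deriv[OF r]] unfolding Y_def by simp
    moreover have "(1 + Wf \<rho>) * (Wf \<rho> / (1 + Wf \<rho>) * Y) = Wf \<rho> * Y" using w by (simp add: field_simps)
    ultimately have n: "((\<lambda>x. Wf x + (Wf x)\<^sup>2 / 2) has_real_derivative Wf \<rho> * Y) (at \<rho>)" by simp
    have d: "((\<lambda>x. 1 - x\<^sup>2) has_real_derivative - (2 * \<rho>)) (at \<rho>)"
      by (auto intro!: derivative_eq_intros)
    have "(Df has_real_derivative (Wf \<rho> * Y * (1 - \<rho>\<^sup>2) - (Wf \<rho> + (Wf \<rho>)\<^sup>2 / 2) * - (2 * \<rho>)) / ((1 - \<rho>\<^sup>2) * (1 - \<rho>\<^sup>2))) (at \<rho>)"
      unfolding Df_def[abs_def] by (rule DERIV_divide[OF n d]) (use q in auto)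
    moreover have "(Wf \<rho> * Y * (1 - \<rho>\<^sup>2) - (Wf \<rho> + (Wf \<rho>)\<^sup>2 / 2) * - (2 * \<rho>)) / ((1 - \<rho>\<^sup>2) * (1 - \<rho>\<^sup>2))
       = Wf \<rho> / (1 - \<rho>\<^sup>2) * (\<rho> * Wf \<rho> / (1 - \<rho>\<^sup>2) - a)"
    proof -
      have gen: "(w * (- 2 * x / qq - a) * qq - (w + w\<^sup>2 / 2) * - (2 * x)) / (qq * qq) = w / qq * (x * w / qq - a)"
        if "qq > 0" for qq w x :: real using that by (simp add: field_simps power2_eq_square)
      show ?thesis unfolding Y_def by (rule gen[OF q])
    qed
    ultimately show ?thesis by simp
  qed
qed


definition w0 :: real where "w0 = lambertW K"

lemma w0_pos: "w0 > 0" and w0_eq: "w0 * exp w0 = K"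
  unfolding w0_def using lambertW_pos[OF K] by auto

lemma Wf_cmp:
  assumes r: "\<bar>\<rho>\<bar> < 1"
  shows "Wf \<rho> > (1 - \<rho>\<^sup>2) * w0 \<longleftrightarrow> \<rho> * (\<rho> * w0 - a) > 0"
    and "Wf \<rho> < (1 - \<rho>\<^sup>2) * w0 \<longleftrightarrow> \<rho> * (\<rho> * w0 - a) < 0"
proof -
  have q: "1 - \<rho>\<^sup>2 > 0" using sq_lt1[OF r] .
  define v where "v = (1 - \<rho>\<^sup>2) * w0"
  have v: "v > 0" unfolding v_def using q w0_pos by auto
  have ve: "v * exp v = K * (1 - \<rho>\<^sup>2) * exp (- (\<rho>\<^sup>2 * w0))"
  proof -
    have "v * exp v = (1 - \<rho>\<^sup>2) * (w0 * exp w0) * exp (- (\<rho>\<^sup>2 * w0))"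
      unfolding v_def by (simp add: algebra_simps flip: exp_add)
    then show ?thesis using w0_eq by simp
  qed
  have A: "Af \<rho> = K * (1 - \<rho>\<^sup>2) * exp (- a * \<rho>)" unfolding Af_def ..
  have KQ: "K * (1 - \<rho>\<^sup>2) > 0" using K q by simp
  have e1: "Af \<rho> > v * exp v \<longleftrightarrow> \<rho> * (\<rho> * w0 - a) > 0"
  proof -
    have "Af \<rho> > v * exp v \<longleftrightarrow> exp (- (\<rho>\<^sup>2 * w0)) < exp (- a * \<rho>)"
      unfolding A ve using mult_less_cancel_left_pos[OF KQ] by simp
    also have "\<dots> \<longleftrightarrow> \<rho> * (\<rho> * w0 - a) > 0" by (simp add: algebra_simps power2_eq_square)
    finally show ?thesis .
  qed
  have e2: "Af \<rho> < v * exp v \<longleftrightarrow> \<rho> * (\<rho> * w0 - a) < 0"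
  proof -
    have "Af \<rho> < v * exp v \<longleftrightarrow> exp (- a * \<rho>) < exp (- (\<rho>\<^sup>2 * w0))"
      unfolding A ve using mult_less_cancel_left_pos[OF KQ] by simp
    also have "\<dots> \<longleftrightarrow> \<rho> * (\<rho> * w0 - a) < 0" by (simp add: algebra_simps power2_eq_square)
    finally show ?thesis .
  qed
  have W: "Wf \<rho> > 0" "Wf \<rho> * exp (Wf \<rho>) = Af \<rho>" using Wf_pos[OF r] Wf_eq[OF r] by auto
  have "Wf \<rho> > v \<longleftrightarrow> Af \<rho> > v * exp v"
    using xexp_strict_mono[of v "Wf \<rho>"] xexp_strict_mono[of "Wf \<rho>" v] v W
    by (cases "Wf \<rho> < v"; cases "v < Wf \<rho>") auto
  then show "Wf \<rho> > (1 - \<rho>\<^sup>2) * w0 \<longleftrightarrow> \<rho> * (\<rho> * w0 - a) > 0" using e1 v_def by simp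
  have "Wf \<rho> < v \<longleftrightarrow> Af \<rho> < v * exp v"
    using xexp_strict_mono[of v "Wf \<rho>"] xexp_strict_mono[of "Wf \<rho>" v] v W
    by (cases "Wf \<rho> < v"; cases "v < Wf \<rho>") auto
  then show "Wf \<rho> < (1 - \<rho>\<^sup>2) * w0 \<longleftrightarrow> \<rho> * (\<rho> * w0 - a) < 0" using e2 v_def by simp
qed

lemma sign_pos:
  assumes r: "\<bar>\<rho>\<bar> < 1" and h: "\<rho> * w0 > a"
  shows "\<rho> * Wf \<rho> / (1 - \<rho>\<^sup>2) - a > 0"
proof -
  have q: "1 - \<rho>\<^sup>2 > 0" using sq_lt1[OF r] .
  have "\<rho> * Wf \<rho> > a * (1 - \<rho>\<^sup>2)"
  proof (cases "\<rho> > 0")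
    case True
    then have "Wf \<rho> > (1 - \<rho>\<^sup>2) * w0" using Wf_cmp(1)[OF r] h by simp
    then have "\<rho> * Wf \<rho> > \<rho> * ((1 - \<rho>\<^sup>2) * w0)" using True by simp
    moreover have "\<rho> * ((1 - \<rho>\<^sup>2) * w0) > a * (1 - \<rho>\<^sup>2)" using h q
      by (metis mult.assoc mult.commute mult_strict_left_mono)
    ultimately show ?thesis by linarith
  next
    case False
    show ?thesis
    proof (cases "\<rho> = 0")
      case True then show ?thesis using h by simp
    next
      case F: False
      with False have neg: "\<rho> < 0" by simp
      then have "\<rho> * (\<rho> * w0 - a) < 0" using h by (simp add: mult_neg_pos)
      then have "Wf \<rho> < (1 - \<rho>\<^sup>2) * w0" using Wf_cmp(2)[OF r] by simp
      then have "\<rho> * Wf \<rho> > \<rho> * ((1 - \<rho>\<^sup>2) * w0)" using neg by simp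
      moreover have "\<rho> * ((1 - \<rho>\<^sup>2) * w0) > a * (1 - \<rho>\<^sup>2)" using h q
        by (metis mult.assoc mult.commute mult_strict_left_mono)
      ultimately show ?thesis by linarith
    qed
  qed
  then show ?thesis using q by (simp add: field_simps)
qed

lemma sign_neg:
  assumes r: "\<bar>\<rho>\<bar> < 1" and h: "\<rho> * w0 < a"
  shows "\<rho> * Wf \<rho> / (1 - \<rho>\<^sup>2) - a < 0"
proof -
  have q: "1 - \<rho>\<^sup>2 > 0" using sq_lt1[OF r] .
  have "\<rho> * Wf \<rho> < a * (1 - \<rho>\<^sup>2)"
  proof (cases "\<rho> > 0")
    case True
    then have "\<rho> * (\<rho> * w0 - a) < 0" using h by (simp add: mult_pos_neg)
    then have "Wf \<rho> < (1 - \<rho>\<^sup>2) * w0" using Wf_cmp(2)[OF r] by simp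
    then have "\<rho> * Wf \<rho> < \<rho> * ((1 - \<rho>\<^sup>2) * w0)" using True by simp
    moreover have "\<rho> * ((1 - \<rho>\<^sup>2) * w0) < a * (1 - \<rho>\<^sup>2)" using h q
      by (metis mult.assoc mult.commute mult_strict_left_mono)
    ultimately show ?thesis by linarith
  next
    case False
    show ?thesis
    proof (cases "\<rho> = 0")
      case True then show ?thesis using h by simp
    next
      case F: False
      with False have neg: "\<rho> < 0" by simp
      then have "\<rho> * (\<rho> * w0 - a) > 0" using h by (simp add: mult_neg_neg)
      then have "Wf \<rho> > (1 - \<rho>\<^sup>2) * w0" using Wf_cmp(1)[OF r] by simp
      then have "\<rho> * Wf \<rho> < \<rho> * ((1 - \<rho>\<^sup>2) * w0)" using neg by simp
      moreover have "\<rho> * ((1 - \<rho>\<^sup>2) * w0) < a * (1 - \<rho>\<^sup>2)" using h q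
        by (metis mult.assoc mult.commute mult_strict_left_mono)
      ultimately show ?thesis by linarith
    qed
  qed
  then show ?thesis using q by (simp add: field_simps)
qed

lemma Df_cont: "-1 \<le> x \<Longrightarrow> x \<le> y \<Longrightarrow> -1 < x \<Longrightarrow> y < 1 \<Longrightarrow> continuous_on {x..y} Df"
  by (rule continuous_at_imp_continuous_on) (auto intro!: DERIV_isCont[OF Df_deriv])

lemma Df_inc:
  assumes "-1 < x" "x < y" "y < 1" "x * w0 \<ge> a"
  shows "Df x < Df y"
proof (rule DERIV_pos_imp_increasing_open[OF assms(2)])
  fix t assume t: "x < t" "t < y"
  then have r: "\<bar>t\<bar> < 1" using assms by auto
  have "t * w0 > a" using mult_strict_right_mono[OF t(1) w0_pos] assms(4) by linarith
  then have "Wf t / (1 - t\<^sup>2) * (t * Wf t / (1 - t\<^sup>2) - a) > 0"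
    using sign_pos[OF r] Wf_pos[OF r] sq_lt1[OF r] by simp
  then show "\<exists>y. DERIV Df t :> y \<and> y > 0" using Df_deriv[OF r] by blast
qed (rule Df_cont, use assms in auto)

lemma Df_dec:
  assumes "-1 < x" "x < y" "y < 1" "y * w0 \<le> a"
  shows "Df x > Df y"
proof (rule DERIV_neg_imp_decreasing_open[OF assms(2)])
  fix t assume t: "x < t" "t < y"
  then have r: "\<bar>t\<bar> < 1" using assms by auto
  have "t * w0 < a" using mult_strict_right_mono[OF t(2) w0_pos] assms(4) by linarith
  then have "Wf t / (1 - t\<^sup>2) * (t * Wf t / (1 - t\<^sup>2) - a) < 0"
  proof -
    have "Wf t / (1 - t\<^sup>2) > 0" using Wf_pos[OF r] sq_lt1[OF r] by simp
    then show ?thesis using sign_neg[OF r \<open>t * w0 < a\<close>] by (rule mult_pos_neg)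
  qed
  then show "\<exists>y. DERIV Df t :> y \<and> y < 0" using Df_deriv[OF r] by blast
qed (rule Df_cont, use assms in auto)

end



lemma fmN: "finite_measure (density lborel std_normal_density)"
  by (rule prob_space.finite_measure[OF prob_space_normal_density]) simp

lemma std_normal_mgf_pt: "std_normal_density x * exp (b * x) = exp (b\<^sup>2 / 2) * normal_density b 1 x"
proof -
  have e: "- x\<^sup>2 / 2 + b * x = b\<^sup>2 / 2 + (- (x - b)\<^sup>2 / (2 * 1\<^sup>2))"
    by (simp add: power2_eq_square field_simps)
  have "std_normal_density x * exp (b * x) = 1 / sqrt (2 * pi) * exp (- x\<^sup>2 / 2 + b * x)"
    unfolding std_normal_density_def exp_add by simp
  also have "\<dots> = exp (b\<^sup>2 / 2) * normal_density b 1 x"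
    unfolding e exp_add normal_density_def by simp
  finally show ?thesis .
qed

lemma std_normal_mgf:
  "integrable (density lborel std_normal_density) (\<lambda>x. exp (b * x))"
  "integral\<^sup>L (density lborel std_normal_density) (\<lambda>x. exp (b * x)) = exp (b\<^sup>2 / 2)"
proof -
  have i: "integrable lborel (\<lambda>x. std_normal_density x * exp (b * x))"
    unfolding std_normal_mgf_pt by (intro integrable_mult_right integrable_normal_density) auto
  show "integrable (density lborel std_normal_density) (\<lambda>x. exp (b * x))"
    by (subst integrable_density) (use i in \<open>auto simp: normal_density_nonneg\<close>)
  have "integral\<^sup>L (density lborel std_normal_density) (\<lambda>x. exp (b * x))
      = integral\<^sup>L lborel (\<lambda>x. std_normal_density x * exp (b * x))"
    by (subst integral_density) auto
  also have "\<dots> = exp (b\<^sup>2 / 2)" unfolding std_normal_mgf_pt by simp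
  finally show "integral\<^sup>L (density lborel std_normal_density) (\<lambda>x. exp (b * x)) = exp (b\<^sup>2 / 2)" .
qed

lemma gauss_bound:
  fixes c s :: real
  assumes c: "c < 0" and s: "s > 0"
  defines "w \<equiv> lambertW (- c * s\<^sup>2)"
  shows "gauss_expect (\<lambda>n. exp (c * exp (s * n))) \<le> exp (- (w + w\<^sup>2 / 2) / s\<^sup>2)"
    and "gauss_expect (\<lambda>n. exp (c * exp (s * n))) > 0"
proof -
  let ?M = "density lborel std_normal_density"
  let ?f = "\<lambda>n. exp (c * exp (s * n))"
  have intf: "integrable ?M ?f"
    by (rule finite_measure.integrable_const_bound[OF fmN, where B=1]) (use c in \<open>auto simp: mult_neg_pos less_imp_le\<close>)
  have wp: "w > 0" and we: "w * exp w = - c * s\<^sup>2"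
  proof -
    have "- c * s\<^sup>2 > 0" using c s by (simp add: mult_neg_pos)
    then show "w > 0" "w * exp w = - c * s\<^sup>2" unfolding w_def using lambertW_pos by auto
  qed
  define \<beta> where "\<beta> = c * exp (- w) * s"
  define \<alpha> where "\<alpha> = c * exp (- w) * (1 + w)"
  have bound: "?f n \<le> exp \<alpha> * exp (\<beta> * n)" for n
  proof -
    have "exp (- w) * (1 + (s * n + w)) \<le> exp (- w) * exp (s * n + w)"
      by (intro mult_left_mono exp_ge_add_one_self) auto
    also have "\<dots> = exp (s * n)" by (simp flip: exp_add)
    finally have "c * exp (s * n) \<le> c * (exp (- w) * (1 + (s * n + w)))"
      using c by (intro mult_left_mono_neg) auto
    also have "\<dots> = \<alpha> + \<beta> * n" unfolding \<alpha>_def \<beta>_def by (simp add: algebra_simps)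
    finally show ?thesis by (simp flip: exp_add)
  qed
  have "gauss_expect ?f \<le> integral\<^sup>L ?M (\<lambda>n. exp \<alpha> * exp (\<beta> * n))"
    unfolding gauss_expect_def
    by (rule integral_mono[OF intf]) (use std_normal_mgf(1) bound in auto)
  also have "\<dots> = exp \<alpha> * exp (\<beta>\<^sup>2 / 2)" using std_normal_mgf(2) by simp
  also have "\<dots> = exp (- (w + w\<^sup>2 / 2) / s\<^sup>2)"
  proof -
    have ce: "c * exp (- w) = - w / s\<^sup>2"
    proof -
      have "c * s\<^sup>2 = - (w * exp w)" using we by simp
      then have "c * s\<^sup>2 * exp (- w) = - w * (exp w * exp (- w))" by simp
      also have "\<dots> = - w" by (simp flip: exp_add)
      finally show ?thesis using s by (simp add: field_simps)
    qed
    have "\<alpha> + \<beta>\<^sup>2 / 2 = - (w + w\<^sup>2 / 2) / s\<^sup>2"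
      unfolding \<alpha>_def \<beta>_def power_mult_distrib ce using s by (simp add: field_simps power2_eq_square)
    then show ?thesis by (simp flip: exp_add)
  qed
  finally show "gauss_expect ?f \<le> exp (- (w + w\<^sup>2 / 2) / s\<^sup>2)" .
  have "gauss_expect ?f \<ge> 0" unfolding gauss_expect_def by (rule integral_nonneg_AE) auto
  moreover have "gauss_expect ?f \<noteq> 0"
    unfolding gauss_expect_def
    by (subst integral_nonneg_eq_0_iff_AE[OF intf]) (auto simp: prob_space.AE_False[OF prob_space_normal_density])
  ultimately show "gauss_expect ?f > 0" by simp
qed


theorem proposition2:
  fixes T r nu mu x0 eta sig s0 lam gam :: real
  assumes "T > 0" and "eta > 0" and "sig > 0" and "s0 > 0" and "lam > 0" and "gam > 0"
  defines "d \<equiv> dfun T r nu mu sig eta s0 lam gam"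
      and "g \<equiv> gfun T r nu mu sig eta s0 lam gam"
      and "p \<equiv> pfun T r nu mu sig eta s0 lam gam"
      and "V \<equiv> Vfun T r nu mu sig eta x0 s0 lam gam"
      and "\<rho>s \<equiv> eta * T / lambertW (lam * gam * s0 * eta\<^sup>2 * T * exp ((nu - eta\<^sup>2 / 2) * T))
                 * ((mu - r) / sig)"
  shows "(\<rho>s \<le> -1 \<longrightarrow> strict_mono_on {-1<..<1} d)
       \<and> (\<rho>s \<ge> 1 \<longrightarrow> strict_antimono_on {-1<..<1} d)
       \<and> (-1 < \<rho>s \<and> \<rho>s < 1 \<longrightarrow>
            strict_antimono_on {-1<..<\<rho>s} d
          \<and> strict_mono_on {\<rho>s<..<1} d
          \<and> d \<rho>s = d 0 - exp (- r * T) * (mu - r)\<^sup>2 * T / (2 * gam * sig\<^sup>2)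
          \<and> g \<rho>s = g 0 - exp (- r * T) * (mu - r)\<^sup>2 * T / (2 * gam * sig\<^sup>2)
          \<and> (INF \<rho>\<in>{-1<..<1}. ereal (p \<rho>))
               \<ge> ereal (d 0 - exp (- r * T) / (2 * gam) * ((mu - r) / sig)\<^sup>2 * T)
          \<and> (INF \<rho>\<in>{-1<..<1}. ereal (V \<rho>))
               \<ge> ereal (- (1 / gam) * exp (- gam * exp (r * T) * (x0 + d 0))))"
proof -
  note pos = assms(1-6)
  define K where "K = lam * gam * s0 * eta\<^sup>2 * T * exp ((nu - eta\<^sup>2 / 2) * T)"
  define a where "a = eta * T * ((mu - r) / sig)"
  define c where "c = exp (- r * T) / (gam * eta\<^sup>2 * T)"
  have Kp: "K > 0" unfolding K_def using pos by simp
  have cp: "c > 0" unfolding c_def using pos by simp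
  interpret L: lw K a by unfold_locales (rule Kp)
  have w0p: "L.w0 > 0" by (rule L.w0_pos)
  have rs: "\<rho>s = a / L.w0" unfolding \<rho>s_def L.w0_def K_def[symmetric] a_def by simp
  have rs_iff1: "\<rho> * L.w0 > a \<longleftrightarrow> \<rho> > \<rho>s" for \<rho>
    unfolding rs using w0p by (simp add: field_simps)
  have rs_iff2: "\<rho> * L.w0 \<ge> a \<longleftrightarrow> \<rho> \<ge> \<rho>s" for \<rho>
    unfolding rs using w0p by (simp add: field_simps)
  have arg: "s0 * eta\<^sup>2 * T * exp (drift r nu mu sig eta \<rho> * T) * theta lam gam \<rho> = L.Af \<rho>" for \<rho>
  proof -
    have "drift r nu mu sig eta \<rho> * T = (nu - eta\<^sup>2 / 2) * T + (- a * \<rho>)"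
      unfolding drift_def a_def by (simp add: algebra_simps)
    then have "exp (drift r nu mu sig eta \<rho> * T) = exp ((nu - eta\<^sup>2 / 2) * T) * exp (- a * \<rho>)"
      using exp_add[of "(nu - eta\<^sup>2 / 2) * T" "- a * \<rho>"] by simp
    then show ?thesis unfolding L.Af_def by (simp add: K_def theta_def algebra_simps)
  qed
  have wW: "wfun T r nu mu sig eta s0 lam gam \<rho> = L.Wf \<rho>" for \<rho>
    unfolding wfun_def L.Wf_def arg ..
  have dD: "d \<rho> = c * L.Df \<rho>" if r: "\<bar>\<rho>\<bar> < 1" for \<rho>
  proof -
    have q: "1 - \<rho>\<^sup>2 \<noteq> 0" using L.sq_lt1[OF r] by simp
    show ?thesis unfolding d_def dfun_def Let_def wW L.Df_def c_def theta_def
      using q pos by (simp add: field_simps power2_eq_square)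
  qed
  have gG: "g \<rho> = c * (L.Wf \<rho> * (exp (eta\<^sup>2 / 2 * T) + L.Wf \<rho> / 2)) / (1 - \<rho>\<^sup>2)" if r: "\<bar>\<rho>\<bar> < 1" for \<rho>
  proof -
    have q: "1 - \<rho>\<^sup>2 \<noteq> 0" using L.sq_lt1[OF r] by simp
    show ?thesis unfolding g_def gfun_def Let_def wW c_def theta_def
      using q pos by (simp add: field_simps power2_eq_square)
  qed
  have inc: "d x < d y" if "-1 < x" "x < y" "y < 1" "x \<ge> \<rho>s" for x y
  proof -
    have "L.Df x < L.Df y" using L.Df_inc[of x y] that rs_iff2 by auto
    moreover have "\<bar>x\<bar> < 1" "\<bar>y\<bar> < 1" using that by auto
    ultimately show ?thesis using dD cp by simp
  qed
  have dec: "d x > d y" if "-1 < x" "x < y" "y < 1" "y \<le> \<rho>s" for x y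
  proof -
    have "y * L.w0 \<le> a" using rs_iff1[of y] that by linarith
    then have "L.Df x > L.Df y" using L.Df_dec[of x y] that by auto
    moreover have "\<bar>x\<bar> < 1" "\<bar>y\<bar> < 1" using that by auto
    ultimately show ?thesis using dD cp by simp
  qed
  have P1: "\<rho>s \<le> -1 \<longrightarrow> strict_mono_on {-1<..<1} d"
    unfolding monotone_on_def using inc by fastforce
  have P2: "\<rho>s \<ge> 1 \<longrightarrow> strict_antimono_on {-1<..<1} d"
    unfolding monotone_on_def using dec by fastforce
  have P3: "strict_antimono_on {-1<..<\<rho>s} d \<and> strict_mono_on {\<rho>s<..<1} d
          \<and> d \<rho>s = d 0 - exp (- r * T) * (mu - r)\<^sup>2 * T / (2 * gam * sig\<^sup>2)
          \<and> g \<rho>s = g 0 - exp (- r * T) * (mu - r)\<^sup>2 * T / (2 * gam * sig\<^sup>2)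
          \<and> (INF \<rho>\<in>{-1<..<1}. ereal (p \<rho>))
               \<ge> ereal (d 0 - exp (- r * T) / (2 * gam) * ((mu - r) / sig)\<^sup>2 * T)
          \<and> (INF \<rho>\<in>{-1<..<1}. ereal (V \<rho>))
               \<ge> ereal (- (1 / gam) * exp (- gam * exp (r * T) * (x0 + d 0)))"
    if rr: "-1 < \<rho>s" "\<rho>s < 1"
  proof -
    have r1: "\<bar>\<rho>s\<bar> < 1" using rr by auto
    have r0: "\<bar>0::real\<bar> < 1" by simp
    have A1: "strict_antimono_on {-1<..<\<rho>s} d"
      unfolding monotone_on_def using dec rr by fastforce
    have A2: "strict_mono_on {\<rho>s<..<1} d"
      unfolding monotone_on_def using inc rr by fastforce
    have rsw: "\<rho>s * L.w0 = a" unfolding rs using w0p by simp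
    have Wrs: "L.Wf \<rho>s = (1 - \<rho>s\<^sup>2) * L.w0"
      using L.Wf_cmp[OF r1] rsw by (simp add: linorder_neq_iff[symmetric])
    have W0: "L.Wf 0 = L.w0" unfolding L.Wf_def L.w0_def L.Af_def by simp
    have q: "1 - \<rho>s\<^sup>2 > 0" using L.sq_lt1[OF r1] .
    define D where "D = exp (- r * T) * (mu - r)\<^sup>2 * T / (2 * gam * sig\<^sup>2)"
    have cD: "c * a\<^sup>2 / 2 = D" unfolding c_def a_def D_def using pos
      by (simp add: field_simps power2_eq_square)
    have dd0: "d 0 = c * (L.w0 + L.w0\<^sup>2 / 2)" using dD[OF r0] unfolding L.Df_def W0 by simp
    have ddrs: "d \<rho>s = c * (L.w0 + (1 - \<rho>s\<^sup>2) * L.w0\<^sup>2 / 2)"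
    proof -
      have gen: "((qq * w) + (qq * w)\<^sup>2 / 2) / qq = w + qq * w\<^sup>2 / 2" if "qq > 0" for qq w :: real
        using that by (simp add: field_simps power2_eq_square)
      show ?thesis using dD[OF r1] gen[OF q] unfolding L.Df_def Wrs by simp
    qed
    have A3: "d \<rho>s = d 0 - D"
    proof -
      have "d \<rho>s = d 0 - c * (\<rho>s * L.w0)\<^sup>2 / 2" unfolding ddrs dd0 by (simp add: field_simps power2_eq_square)
      then show ?thesis unfolding rsw cD[symmetric] by simp
    qed
    have A4: "g \<rho>s = g 0 - D"
    proof -
      have g0: "g 0 = c * (L.w0 * (exp (eta\<^sup>2 / 2 * T) + L.w0 / 2))" using gG[OF r0] W0 by simp
      have g1: "g \<rho>s = c * (L.w0 * (exp (eta\<^sup>2 / 2 * T) + (1 - \<rho>s\<^sup>2) * L.w0 / 2))"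
      proof -
        have gen: "cc * ((qq * w) * (E + qq * w / 2)) / qq = cc * (w * (E + qq * w / 2))" if "qq > 0" for qq w cc E :: real
          using that by (simp add: field_simps)
        show ?thesis using gG[OF r1] gen[OF q] unfolding Wrs by simp
      qed
      have "g \<rho>s = g 0 - c * (\<rho>s * L.w0)\<^sup>2 / 2" unfolding g0 g1 by (simp add: field_simps power2_eq_square)
      then show ?thesis unfolding rsw cD[symmetric] by simp
    qed
    have dmin: "d \<rho> \<ge> d \<rho>s" if "-1 < \<rho>" "\<rho> < 1" for \<rho>
    proof -
      consider "\<rho> < \<rho>s" | "\<rho> = \<rho>s" | "\<rho> > \<rho>s" by linarith
      then show ?thesis
      proof cases
        case 1 then show ?thesis using dec[of \<rho> \<rho>s] that rr by simp
      next
        case 3 then show ?thesis using inc[of \<rho>s \<rho>] that rr by simp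
      qed simp
    qed
    have pd: "p \<rho> \<ge> d \<rho>" if "-1 < \<rho>" "\<rho> < 1" for \<rho>
    proof -
      have r: "\<bar>\<rho>\<bar> < 1" using that by auto
      have q: "1 - \<rho>\<^sup>2 > 0" using L.sq_lt1[OF r] .
      define c0 where "c0 = - theta lam gam \<rho> * s0 * exp (drift r nu mu sig eta \<rho> * T)"
      define s where "s = eta * sqrt T"
      have c0n: "c0 < 0" unfolding c0_def theta_def using pos q by (simp add: mult_pos_pos)
      have sp: "s > 0" unfolding s_def using pos by simp
      have ss: "s\<^sup>2 = eta\<^sup>2 * T" unfolding s_def using pos by (simp add: power_mult_distrib)
      have wl: "lambertW (- c0 * s\<^sup>2) = L.Wf \<rho>"
        unfolding ss L.Wf_def arg[symmetric] c0_def by (simp add: algebra_simps)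
      have E1: "gauss_expect (\<lambda>n. exp (c0 * exp (s * n))) \<le> exp (- (L.Wf \<rho> + (L.Wf \<rho>)\<^sup>2 / 2) / s\<^sup>2)"
        using gauss_bound(1)[OF c0n sp] unfolding wl .
      have E2: "gauss_expect (\<lambda>n. exp (c0 * exp (s * n))) > 0" using gauss_bound(2)[OF c0n sp] .
      have lnE: "ln (gauss_expect (\<lambda>n. exp (c0 * exp (s * n)))) \<le> - (L.Wf \<rho> + (L.Wf \<rho>)\<^sup>2 / 2) / s\<^sup>2"
        using E1 E2 by (metis exp_gt_zero ln_exp ln_le_cancel_iff)
      have pe: "p \<rho> = - (exp (- r * T) / (gam * (1 - \<rho>\<^sup>2))) * ln (gauss_expect (\<lambda>n. exp (c0 * exp (s * n))))"
        unfolding p_def pfun_def c0_def s_def by simp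
      have kp: "exp (- r * T) / (gam * (1 - \<rho>\<^sup>2)) > 0" using pos q by simp
      have "p \<rho> \<ge> exp (- r * T) / (gam * (1 - \<rho>\<^sup>2)) * ((L.Wf \<rho> + (L.Wf \<rho>)\<^sup>2 / 2) / s\<^sup>2)"
      proof -
        have gen: "kk * (XX / SS) \<le> - kk * LL" if "LL \<le> - XX / SS" "kk > 0" for kk XX SS LL :: real
        proof -
          have "kk * LL \<le> kk * (- XX / SS)" using mult_left_mono[OF that(1)] that(2) by simp
          moreover have "kk * (- XX / SS) = - (kk * (XX / SS))" by simp
          ultimately show ?thesis by linarith
        qed
        show ?thesis unfolding pe by (rule gen[OF lnE kp])
      qed
      also have "exp (- r * T) / (gam * (1 - \<rho>\<^sup>2)) * ((L.Wf \<rho> + (L.Wf \<rho>)\<^sup>2 / 2) / s\<^sup>2) = d \<rho>"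
        unfolding dD[OF r] c_def L.Df_def ss using q pos by (simp add: field_simps)
      finally show ?thesis .
    qed
    have pb: "p \<rho> \<ge> d 0 - D" if "-1 < \<rho>" "\<rho> < 1" for \<rho>
      using pd[OF that] dmin[OF that] A3 by linarith
    have Deq: "exp (- r * T) / (2 * gam) * ((mu - r) / sig)\<^sup>2 * T = D"
      unfolding D_def by (simp add: power_divide)
    have A5: "(INF \<rho>\<in>{-1<..<1}. ereal (p \<rho>)) \<ge> ereal (d 0 - exp (- r * T) / (2 * gam) * ((mu - r) / sig)\<^sup>2 * T)"
      unfolding Deq by (rule INF_greatest) (use pb in auto)
    have Vb: "V \<rho> \<ge> - (1 / gam) * exp (- gam * exp (r * T) * (x0 + d 0))" if "-1 < \<rho>" "\<rho> < 1" for \<rho>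
    proof -
      define k where "k = (mu - r)\<^sup>2 / (2 * sig\<^sup>2) * T"
      have Dk: "D = exp (- r * T) * k / gam" unfolding D_def k_def using pos by (simp add: field_simps)
      have e: "exp (r * T) * exp (- r * T) = 1" by (simp flip: exp_add)
      have "gam * exp (r * T) * p \<rho> \<ge> gam * exp (r * T) * (d 0 - D)"
        using pb[OF that] pos by (intro mult_left_mono) auto
      also have "gam * exp (r * T) * (d 0 - D) = gam * exp (r * T) * d 0 - k"
        unfolding Dk using pos e by (simp add: field_simps)
      finally have "- gam * exp (r * T) * (x0 + p \<rho>) - k \<le> - gam * exp (r * T) * (x0 + d 0)"
        by (simp add: algebra_simps)
      then have "exp (- gam * exp (r * T) * (x0 + p \<rho>) - k) \<le> exp (- gam * exp (r * T) * (x0 + d 0))"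
        by simp
      then show ?thesis unfolding V_def Vfun_def p_def[symmetric] k_def[symmetric] using pos
        by (simp add: divide_simps)
    qed
    have A6: "(INF \<rho>\<in>{-1<..<1}. ereal (V \<rho>)) \<ge> ereal (- (1 / gam) * exp (- gam * exp (r * T) * (x0 + d 0)))"
      by (rule INF_greatest) (use Vb in auto)
    show ?thesis using A1 A2 A3 A4 A5 A6 unfolding D_def by blast
  qed
  show ?thesis using P1 P2 P3 by blast
qed


end
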